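(* Let $G$ be a simple graph. The spectrum of the adjacency matrix of the triangular signed graph $G_{\vartriangle}$ does not depend on the chosen orientation of $G$ (of its edges and triangles).
   Context: Each edge of $G$ is oriented and each triangle $\vartriangle$ of $G$ is given a cyclic orientation; for an edge $e$ of $\vartriangle$ write $e\in\vartriangle^+$ if the orientation of $e$ agrees with that of $\vartriangle$ and $e\in\vartriangle^-$ otherwise. The triangular signed graph $G_{\vartriangle}$ has the triangles of $G$ as vertices; two distinct triangles $\vartriangle_1,\vartriangle_2$ sharing an edge $e$ are joined by a positive edge if $e\in\vartriangle_1^+\cap\vartriangle_2^+$ or $e\in\vartriangle_1^-\cap\vartriangle_2^-$, and by a negative edge otherwise; triangles sharing no edge are non-adjacent. Its adjacency matrix has entry $1$ for positive edges, $-1$ for negative edges and $0$ elsewhere. *)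

theory Defs
  imports "Jordan_Normal_Form.Determinant" "Jordan_Normal_Form.Char_Poly"
begin

definition simple_graph :: "'a set \<Rightarrow> ('a \<Rightarrow> 'a \<Rightarrow> bool) \<Rightarrow> bool" where
  "simple_graph V E \<longleftrightarrow> finite V \<and> (\<forall>u v. E u v \<longrightarrow> u \<in> V \<and> v \<in> V)
     \<and> (\<forall>u v. E u v \<longrightarrow> E v u) \<and> (\<forall>u. \<not> E u u)"

definition triangles :: "'a set \<Rightarrow> ('a \<Rightarrow> 'a \<Rightarrow> bool) \<Rightarrow> 'a set set" where
  "triangles V E = {T. \<exists>a b c. T = {a, b, c} \<and> a \<in> V \<and> b \<in> V \<and> c \<in> V
      \<and> a \<noteq> b \<and> b \<noteq> c \<and> a \<noteq> c \<and> E a b \<and> E b c \<and> E a c}"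

text \<open>Edge orientation: ori u v means the edge {u,v} is oriented from u to v.\<close>
definition edge_orientation :: "('a \<Rightarrow> 'a \<Rightarrow> bool) \<Rightarrow> ('a \<Rightarrow> 'a \<Rightarrow> bool) \<Rightarrow> bool" where
  "edge_orientation E ori \<longleftrightarrow> (\<forall>u v. ori u v \<longrightarrow> E u v)
     \<and> (\<forall>u v. E u v \<longrightarrow> (ori u v \<or> ori v u)) \<and> (\<forall>u v. \<not> (ori u v \<and> ori v u))"

definition triangle_orientation ::
  "'a set \<Rightarrow> ('a \<Rightarrow> 'a \<Rightarrow> bool) \<Rightarrow> ('a set \<Rightarrow> 'a \<Rightarrow> 'a \<Rightarrow> bool) \<Rightarrow> bool" where
  "triangle_orientation V E tor \<longleftrightarrow> (\<forall>T \<in> triangles V E.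
      (\<forall>x y. tor T x y \<longrightarrow> x \<in> T \<and> y \<in> T \<and> x \<noteq> y)
    \<and> (\<forall>x y. \<not> (tor T x y \<and> tor T y x))
    \<and> (\<forall>x \<in> T. \<exists>!y. tor T x y))"

text \<open>e \<in> T^+ : the orientation of edge e agrees with the cyclic orientation of T.\<close>
definition edge_pos :: "('a \<Rightarrow> 'a \<Rightarrow> bool) \<Rightarrow> ('a set \<Rightarrow> 'a \<Rightarrow> 'a \<Rightarrow> bool) \<Rightarrow> 'a set \<Rightarrow> 'a set \<Rightarrow> bool" where
  "edge_pos ori tor T e \<longleftrightarrow> (\<exists>u v. e = {u, v} \<and> ori u v \<and> tor T u v)"

definition tri_adj :: "('a \<Rightarrow> 'a \<Rightarrow> bool) \<Rightarrow> ('a set \<Rightarrow> 'a \<Rightarrow> 'a \<Rightarrow> bool) \<Rightarrow> 'a set \<Rightarrow> 'a set \<Rightarrow> int" where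
  "tri_adj ori tor T1 T2 =
    (if T1 \<noteq> T2 \<and> card (T1 \<inter> T2) = 2 then
       (if edge_pos ori tor T1 (T1 \<inter> T2) = edge_pos ori tor T2 (T1 \<inter> T2) then 1 else -1)
     else 0)"

text \<open>A fixed enumeration of the triangles (the spectrum does not depend on it).\<close>
definition tri_list :: "'a set \<Rightarrow> ('a \<Rightarrow> 'a \<Rightarrow> bool) \<Rightarrow> 'a set list" where
  "tri_list V E = (SOME xs. distinct xs \<and> set xs = triangles V E)"

definition tri_adj_matrix ::
  "'a set \<Rightarrow> ('a \<Rightarrow> 'a \<Rightarrow> bool) \<Rightarrow> ('a \<Rightarrow> 'a \<Rightarrow> bool) \<Rightarrow> ('a set \<Rightarrow> 'a \<Rightarrow> 'a \<Rightarrow> bool) \<Rightarrow> complex mat" where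
  "tri_adj_matrix V E ori tor =
    (let xs = tri_list V E in
     mat (length xs) (length xs) (\<lambda>(i, j). of_int (tri_adj ori tor (xs ! i) (xs ! j))))"

text \<open>Spectrum with multiplicities: algebraic multiplicity of each complex number as
  an eigenvalue (root multiplicity in the characteristic polynomial).\<close>
definition eig_mult :: "complex mat \<Rightarrow> complex \<Rightarrow> nat" where
  "eig_mult A z = order z (char_poly A)"

end

theory Submission
  imports Defs
begin

lemma cyc_det:
  assumes T: "T = {a,b,c}" "a \<noteq> b" "b \<noteq> c" "a \<noteq> c"
    and R1: "\<forall>x y. R x y \<longrightarrow> x \<in> T \<and> y \<in> T \<and> x \<noteq> y"
    and R2: "\<forall>x y. \<not> (R x y \<and> R y x)"
    and R3: "\<forall>x \<in> T. \<exists>!y. R x y"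
  shows "R a b \<Longrightarrow> R x y \<longleftrightarrow> (x=a\<and>y=b \<or> x=b\<and>y=c \<or> x=c\<and>y=a)"
    and "\<not> R a b \<Longrightarrow> R x y \<longleftrightarrow> (x=b\<and>y=a \<or> x=c\<and>y=b \<or> x=a\<and>y=c)"
proof -
  have ex: "\<And>x. x \<in> T \<Longrightarrow> \<exists>y. R x y" and un: "\<And>x y z. x \<in> T \<Longrightarrow> R x y \<Longrightarrow> R x z \<Longrightarrow> y = z"
    using R3 by blast+
  obtain sa where sa: "R a sa" using ex T by auto
  obtain sb where sb: "R b sb" using ex T by auto
  obtain sc where sc: "R c sc" using ex T by auto
  have "sa \<in> T" "sb \<in> T" "sc \<in> T" "sa \<noteq> a" "sb \<noteq> b" "sc \<noteq> c" using R1 sa sb sc by blast+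
  then have m: "sa = b \<or> sa = c" "sb = a \<or> sb = c" "sc = a \<or> sc = b" using T by auto
  have r2: "\<And>x y. R x y \<Longrightarrow> R y x \<Longrightarrow> False" using R2 by blast
  have cases: "(sa = b \<and> sb = c \<and> sc = a) \<or> (sa = c \<and> sb = a \<and> sc = b)"
    using m r2[OF sa] r2[OF sb] r2[OF sc] sa sb sc by metis
  have Rchar: "R x y \<longleftrightarrow> (x = a \<and> y = sa \<or> x = b \<and> y = sb \<or> x = c \<and> y = sc)"
    using R1 un sa sb sc T by blast
  have aT: "a \<in> T" using T by auto
  show "R a b \<Longrightarrow> R x y \<longleftrightarrow> (x=a\<and>y=b \<or> x=b\<and>y=c \<or> x=c\<and>y=a)"
  proof -
    assume "R a b"
    then have "sa = b" using un[OF aT sa] by simp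
    then have "sb = c \<and> sc = a" using cases T(3) by blast
    then show ?thesis using Rchar \<open>sa = b\<close> by simp
  qed
  show "\<not> R a b \<Longrightarrow> R x y \<longleftrightarrow> (x=b\<and>y=a \<or> x=c\<and>y=b \<or> x=a\<and>y=c)"
  proof -
    assume "\<not> R a b"
    then have "sa \<noteq> b" using sa by blast
    then have "sa = c \<and> sb = a \<and> sc = b" using cases by blast
    then show ?thesis using Rchar by auto
  qed
qed

lemma cyc_ex:
  assumes T: "T = {a,b,c}" "a \<noteq> b" "b \<noteq> c" "a \<noteq> c"
    and R1: "\<forall>x y. R x y \<longrightarrow> x \<in> T \<and> y \<in> T \<and> x \<noteq> y"
    and R2: "\<forall>x y. \<not> (R x y \<and> R y x)"
    and R3: "\<forall>x \<in> T. \<exists>!y. R x y"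
  shows "\<exists>p. \<forall>x y. R x y \<longleftrightarrow> (p \<and> (x=a\<and>y=b \<or> x=b\<and>y=c \<or> x=c\<and>y=a) \<or> \<not> p \<and> (x=b\<and>y=a \<or> x=c\<and>y=b \<or> x=a\<and>y=c))"
proof (cases "R a b")
  case True
  show ?thesis by (rule exI[of _ True]) (simp add: cyc_det(1)[OF assms True])
next
  case False
  show ?thesis by (rule exI[of _ False]) (simp add: cyc_det(2)[OF assms False])
qed

definition tsame :: "('a set \<Rightarrow> 'a \<Rightarrow> 'a \<Rightarrow> bool) \<Rightarrow> ('a set \<Rightarrow> 'a \<Rightarrow> 'a \<Rightarrow> bool) \<Rightarrow> 'a set \<Rightarrow> bool" where
  "tsame t1 t2 T = (\<forall>x\<in>T. \<forall>y\<in>T. x \<noteq> y \<longrightarrow> (t1 T x y \<longleftrightarrow> t2 T x y))"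

lemma tri_facts:
  assumes "T \<in> triangles V E" "triangle_orientation V E tor1" "triangle_orientation V E tor2"
    and "u \<in> T" "v \<in> T" "u \<noteq> v"
  shows "tor1 T v u \<longleftrightarrow> \<not> tor1 T u v"
    and "tor1 T u v \<longleftrightarrow> (tor2 T u v \<longleftrightarrow> tsame tor1 tor2 T)"
proof -
  obtain a b c where T: "T = {a,b,c}" "a \<noteq> b" "b \<noteq> c" "a \<noteq> c"
    using assms(1) unfolding triangles_def by auto
  have o1: "\<forall>x y. tor1 T x y \<longrightarrow> x \<in> T \<and> y \<in> T \<and> x \<noteq> y" "\<forall>x y. \<not> (tor1 T x y \<and> tor1 T y x)" "\<forall>x \<in> T. \<exists>!y. tor1 T x y"
    using assms(1,2) unfolding triangle_orientation_def by blast+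
  have o2: "\<forall>x y. tor2 T x y \<longrightarrow> x \<in> T \<and> y \<in> T \<and> x \<noteq> y" "\<forall>x y. \<not> (tor2 T x y \<and> tor2 T y x)" "\<forall>x \<in> T. \<exists>!y. tor2 T x y"
    using assms(1,3) unfolding triangle_orientation_def by blast+
  have c1: "\<exists>p. \<forall>x y. tor1 T x y \<longleftrightarrow> (p \<and> (x=a\<and>y=b \<or> x=b\<and>y=c \<or> x=c\<and>y=a) \<or> \<not> p \<and> (x=b\<and>y=a \<or> x=c\<and>y=b \<or> x=a\<and>y=c))"
    by (rule cyc_ex[OF T o1])
  then obtain p1 where p1: "\<And>x y. tor1 T x y \<longleftrightarrow> (p1 \<and> (x=a\<and>y=b \<or> x=b\<and>y=c \<or> x=c\<and>y=a) \<or> \<not> p1 \<and> (x=b\<and>y=a \<or> x=c\<and>y=b \<or> x=a\<and>y=c))" by blast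
  have c2: "\<exists>p. \<forall>x y. tor2 T x y \<longleftrightarrow> (p \<and> (x=a\<and>y=b \<or> x=b\<and>y=c \<or> x=c\<and>y=a) \<or> \<not> p \<and> (x=b\<and>y=a \<or> x=c\<and>y=b \<or> x=a\<and>y=c))"
    by (rule cyc_ex[OF T o2])
  then obtain p2 where p2: "\<And>x y. tor2 T x y \<longleftrightarrow> (p2 \<and> (x=a\<and>y=b \<or> x=b\<and>y=c \<or> x=c\<and>y=a) \<or> \<not> p2 \<and> (x=b\<and>y=a \<or> x=c\<and>y=b \<or> x=a\<and>y=c))" by blast
  have uv: "u \<in> {a,b,c}" "v \<in> {a,b,c}" using assms(4,5) T by auto
  show "tor1 T v u \<longleftrightarrow> \<not> tor1 T u v"
    using uv assms(6) T(2-4) unfolding p1 by auto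
  have ts: "tsame tor1 tor2 T \<longleftrightarrow> (p1 \<longleftrightarrow> p2)"
    unfolding tsame_def p1 p2 using T by auto
  show "tor1 T u v \<longleftrightarrow> (tor2 T u v \<longleftrightarrow> tsame tor1 tor2 T)"
    unfolding ts using uv assms(6) T(2-4) unfolding p1 p2 by auto
qed


lemma edge_pos_pair:
  "edge_pos ori tor T {u,v} \<longleftrightarrow> (ori u v \<and> tor T u v) \<or> (ori v u \<and> tor T v u)"
  unfolding edge_pos_def by (auto simp: doubleton_eq_iff)

lemma tri_edge:
  assumes "simple_graph V E" "T \<in> triangles V E" "u \<in> T" "v \<in> T" "u \<noteq> v"
  shows "E u v"
proof -
  obtain a b c where T: "T = {a,b,c}" "E a b" "E b c" "E a c"
    using assms(2) unfolding triangles_def by auto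
  have sym: "\<And>x y. E x y \<Longrightarrow> E y x" using assms(1) unfolding simple_graph_def by blast
  show ?thesis using assms(3-5) T sym by auto
qed

lemma pos_char:
  assumes "simple_graph V E" "T \<in> triangles V E" "u \<in> T" "v \<in> T" "u \<noteq> v"
    and "edge_orientation E ori" "triangle_orientation V E tor" "triangle_orientation V E tor2"
  shows "edge_pos ori tor T {u,v} \<longleftrightarrow> (ori u v \<longleftrightarrow> tor T u v)"
proof -
  have "E u v" using tri_edge[OF assms(1-5)] .
  then have o: "ori v u \<longleftrightarrow> \<not> ori u v" using assms(6) unfolding edge_orientation_def by blast
  have t: "tor T v u \<longleftrightarrow> \<not> tor T u v" using tri_facts(1)[OF assms(2,7,8,3-5)] .
  show ?thesis unfolding edge_pos_pair o t by blast
qed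

lemma entry_rel:
  assumes G: "simple_graph V E"
    and o1: "edge_orientation E ori1" and t1: "triangle_orientation V E tor1"
    and o2: "edge_orientation E ori2" and t2: "triangle_orientation V E tor2"
    and T1: "T1 \<in> triangles V E" and T2: "T2 \<in> triangles V E"
    and c: "card (T1 \<inter> T2) = 2"
  shows "(edge_pos ori1 tor1 T1 (T1 \<inter> T2) = edge_pos ori1 tor1 T2 (T1 \<inter> T2)) \<longleftrightarrow>
         ((edge_pos ori2 tor2 T1 (T1 \<inter> T2) = edge_pos ori2 tor2 T2 (T1 \<inter> T2)) \<longleftrightarrow>
          (tsame tor1 tor2 T1 \<longleftrightarrow> tsame tor1 tor2 T2))"
proof -
  obtain u v where e: "T1 \<inter> T2 = {u,v}" "u \<noteq> v" using c card_2_iff by metis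
  have uv: "u \<in> T1" "v \<in> T1" "u \<in> T2" "v \<in> T2" using e by auto
  note p11 = pos_char[OF G T1 uv(1,2) e(2) o1 t1 t2]
  note p12 = pos_char[OF G T2 uv(3,4) e(2) o1 t1 t2]
  note p21 = pos_char[OF G T1 uv(1,2) e(2) o2 t2 t1]
  note p22 = pos_char[OF G T2 uv(3,4) e(2) o2 t2 t1]
  note s1 = tri_facts(2)[OF T1 t1 t2 uv(1,2) e(2)]
  note s2 = tri_facts(2)[OF T2 t1 t2 uv(3,4) e(2)]
  show ?thesis unfolding e p11 p12 p21 p22 s1 s2 by blast
qed

lemma finite_tri: "simple_graph V E \<Longrightarrow> finite (triangles V E)"
proof -
  assume "simple_graph V E"
  then have "finite (Pow V)" unfolding simple_graph_def by simp
  moreover have "triangles V E \<subseteq> Pow V" unfolding triangles_def by auto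
  ultimately show ?thesis by (rule finite_subset[rotated])
qed

lemma tri_list_props:
  assumes "simple_graph V E"
  shows "distinct (tri_list V E) \<and> set (tri_list V E) = triangles V E"
  unfolding tri_list_def
  by (rule someI_ex) (use finite_distinct_list[OF finite_tri[OF assms]] in metis)

theorem corollary5p2:
  fixes V :: "'a set" and E :: "'a \<Rightarrow> 'a \<Rightarrow> bool"
    and ori1 ori2 :: "'a \<Rightarrow> 'a \<Rightarrow> bool"
    and tor1 tor2 :: "'a set \<Rightarrow> 'a \<Rightarrow> 'a \<Rightarrow> bool"
  assumes "simple_graph V E"
    and "edge_orientation E ori1" and "triangle_orientation V E tor1"
    and "edge_orientation E ori2" and "triangle_orientation V E tor2"
  shows "\<forall>z. eig_mult (tri_adj_matrix V E ori1 tor1) z = eig_mult (tri_adj_matrix V E ori2 tor2) z"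
proof -
  define xs where "xs = tri_list V E"
  define n where "n = length xs"
  define sg :: "nat \<Rightarrow> complex" where "sg i = (if tsame tor1 tor2 (xs ! i) then 1 else -1)" for i
  define D where "D = mat_diag n sg"
  define A1 where "A1 = tri_adj_matrix V E ori1 tor1"
  define A2 where "A2 = tri_adj_matrix V E ori2 tor2"
  have xsT: "\<And>i. i < n \<Longrightarrow> xs ! i \<in> triangles V E"
    using tri_list_props[OF assms(1)] unfolding xs_def n_def by auto
  have A1c: "A1 \<in> carrier_mat n n" and A2c: "A2 \<in> carrier_mat n n"
    unfolding A1_def A2_def tri_adj_matrix_def xs_def[symmetric] n_def Let_def by auto
  have Dc: "D \<in> carrier_mat n n" unfolding D_def by simp
  have sq: "\<And>i. sg i * sg i = 1" unfolding sg_def by auto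
  have DD: "D * D = 1\<^sub>m n" unfolding D_def mat_diag_diag sq by simp
  have ent: "A1 $$ (i,j) = sg i * A2 $$ (i,j) * sg j" if "i < n" "j < n" for i j
  proof -
    have e1: "A1 $$ (i,j) = of_int (tri_adj ori1 tor1 (xs ! i) (xs ! j))"
      unfolding A1_def tri_adj_matrix_def xs_def[symmetric] n_def[symmetric] Let_def using that by simp
    have e2: "A2 $$ (i,j) = of_int (tri_adj ori2 tor2 (xs ! i) (xs ! j))"
      unfolding A2_def tri_adj_matrix_def xs_def[symmetric] n_def[symmetric] Let_def using that by simp
    show ?thesis
    proof (cases "xs ! i \<noteq> xs ! j \<and> card (xs ! i \<inter> xs ! j) = 2")
      case True
      note r = entry_rel[OF assms xsT[OF that(1)] xsT[OF that(2)] conjunct2[OF True]]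
      show ?thesis unfolding e1 e2 tri_adj_def sg_def using True r by auto
    next
      case False
      then show ?thesis unfolding e1 e2 tri_adj_def by auto
    qed
  qed
  have "A1 = D * A2 * D"
  proof -
    have "D * A2 * D = mat n n (\<lambda>(i,j). sg i * A2 $$ (i,j) * sg j)"
      unfolding D_def
      apply (subst mat_diag_mult_left[OF A2c])
      apply (subst mat_diag_mult_right[of _ n n])
      by auto
    then show ?thesis using A1c ent by (auto intro!: eq_matI)
  qed
  then have "similar_mat_wit A1 A2 D D"
    by (intro similar_mat_witI[OF DD DD _ A1c A2c Dc Dc])
  then have "similar_mat A1 A2" unfolding similar_mat_def by blast
  then have "char_poly A1 = char_poly A2" by (rule char_poly_similar)
  then show ?thesis unfolding eig_mult_def A1_def A2_def by simp
qed

end
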